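(* In every $n$-resource selection game $G$, the set $D_G$ is nonempty, $P_G\ne\emptyset$, and $h_G\in\mathbb{R}$ is well defined.
   Context: An $n$-resource selection game is $G=\bigl((f_j)_{j=1}^n;(\mu^{R})_{\emptyset\ne R\subseteq[n]}\bigr)$ with each $f_j:[0,\infty)\to\mathbb{R}$ nondecreasing and each $\mu^R\ge0$. For nondecreasing $g_1,\ldots,g_m:[0,\infty)\to\mathbb{R}\cup\{\mathrm{undefined}\}$, $\mathrm{eq}(g_1,\ldots,g_m)(\mu)$ equals $g_1(\mu_1)$ if there exist $\mu_1,\ldots,\mu_m\ge0$ with $\sum\mu_j=\mu$ and $g_1(\mu_1)=\cdots=g_m(\mu_m)\in\mathbb{R}$, and $\mathrm{undefined}$ otherwise (well defined). For nonempty $S\subseteq[n]$: $E_G(S)=\mathrm{eq}(f_k:k\in S)\bigl(\sum_{\emptyset\ne R\subseteq S}\mu^R\bigr)$; $M_G(S)$ is the set of nonempty $S'\subseteq S$ such that for every $0\le\mu\le\sum_{R\subseteq S,\,R\cap S'\ne\emptyset}\mu^R$, $\mathrm{eq}(f_k:k\in S')(\mu)\ne E_G(S)$ (where $\mathrm{undefined}$ counts as different from every real); $D_G=\{S:\ E_G(S)\in\mathbb{R}\text{ and }M_G(S)=\emptyset\}$; $h_G=\max_{S\in D_G}E_G(S)$; $P_G=\bigcup\{S\in D_G: E_G(S)=h_G\}$. *)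

theory Defs
  imports Complex_Main 
begin

text \<open>Resources are indexed by {1..n}; cost functions f j :: real => real (only values on [0,oo)
matter); demands mu R for sets R of resources. The value "undefined" of eq is modelled by None.\<close>

definition eq_rel :: "(nat \<Rightarrow> real \<Rightarrow> real) \<Rightarrow> nat set \<Rightarrow> real \<Rightarrow> real \<Rightarrow> bool" where
  "eq_rel f S m c \<longleftrightarrow> (\<exists>x. (\<forall>j\<in>S. x j \<ge> 0) \<and> (\<Sum>j\<in>S. x j) = m \<and> (\<forall>j\<in>S. f j (x j) = c))"

definition eqv :: "(nat \<Rightarrow> real \<Rightarrow> real) \<Rightarrow> nat set \<Rightarrow> real \<Rightarrow> real option" where
  "eqv f S m = (if \<exists>c. eq_rel f S m c then Some (THE c. eq_rel f S m c) else None)"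

definition E_G :: "(nat \<Rightarrow> real \<Rightarrow> real) \<Rightarrow> (nat set \<Rightarrow> real) \<Rightarrow> nat set \<Rightarrow> real option" where
  "E_G f \<mu> S = eqv f S (\<Sum>R\<in>{R. R \<noteq> {} \<and> R \<subseteq> S}. \<mu> R)"

definition M_G :: "(nat \<Rightarrow> real \<Rightarrow> real) \<Rightarrow> (nat set \<Rightarrow> real) \<Rightarrow> nat set \<Rightarrow> nat set set" where
  "M_G f \<mu> S = {S'. S' \<noteq> {} \<and> S' \<subseteq> S \<and>
     (\<forall>m. 0 \<le> m \<and> m \<le> (\<Sum>R\<in>{R. R \<subseteq> S \<and> R \<inter> S' \<noteq> {}}. \<mu> R)
          \<longrightarrow> eqv f S' m \<noteq> E_G f \<mu> S)}"

definition D_G :: "nat \<Rightarrow> (nat \<Rightarrow> real \<Rightarrow> real) \<Rightarrow> (nat set \<Rightarrow> real) \<Rightarrow> nat set set" where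
  "D_G n f \<mu> = {S. S \<noteq> {} \<and> S \<subseteq> {1..n} \<and> E_G f \<mu> S \<noteq> None \<and> M_G f \<mu> S = {}}"

definition h_G :: "nat \<Rightarrow> (nat \<Rightarrow> real \<Rightarrow> real) \<Rightarrow> (nat set \<Rightarrow> real) \<Rightarrow> real" where
  "h_G n f \<mu> = Max ((\<lambda>S. the (E_G f \<mu> S)) ` D_G n f \<mu>)"

definition P_G :: "nat \<Rightarrow> (nat \<Rightarrow> real \<Rightarrow> real) \<Rightarrow> (nat set \<Rightarrow> real) \<Rightarrow> nat set" where
  "P_G n f \<mu> = \<Union>{S \<in> D_G n f \<mu>. E_G f \<mu> S = Some (h_G n f \<mu>)}"

end

theory Submission
  imports Defs
begin

lemma sets_single1: "{R. R \<noteq> {} \<and> R \<subseteq> {j::nat}} = {{j}}" by auto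
lemma sets_single2: "{R. R \<subseteq> {j::nat} \<and> R \<inter> {j} \<noteq> {}} = {{j}}" by auto

lemma eqv_single:
  assumes "m \<ge> 0" shows "eqv f {j} m = Some (f j m)"
proof -
  have r: "eq_rel f {j} m c \<longleftrightarrow> c = f j m" for c
    unfolding eq_rel_def using assms by auto
  show ?thesis unfolding eqv_def using r by auto
qed

lemma single_in_D:
  assumes "j \<in> {1..n}" and "\<mu> {j} \<ge> 0"
  shows "{j} \<in> D_G n f \<mu>"
proof -
  have E: "E_G f \<mu> {j} = Some (f j (\<mu> {j}))"
    unfolding E_G_def sets_single1 using eqv_single[OF assms(2)] by simp
  have "M_G f \<mu> {j} = {}"
  proof (rule ccontr)
    assume "M_G f \<mu> {j} \<noteq> {}"
    then obtain S' where S': "S' \<in> M_G f \<mu> {j}" by blast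
    then have "S' = {j}" unfolding M_G_def by auto
    with S' have "\<forall>m. 0 \<le> m \<and> m \<le> (\<Sum>R\<in>{R. R \<subseteq> {j} \<and> R \<inter> {j} \<noteq> {}}. \<mu> R) \<longrightarrow> eqv f {j} m \<noteq> E_G f \<mu> {j}"
      unfolding M_G_def by blast
    hence "eqv f {j} (\<mu> {j}) \<noteq> E_G f \<mu> {j}"
      unfolding sets_single2 using assms(2) by simp
    with E eqv_single[OF assms(2)] show False by simp
  qed
  with E assms(1) show ?thesis unfolding D_G_def by auto
qed

theorem mainTheorem13:
  fixes n :: nat and f :: "nat \<Rightarrow> real \<Rightarrow> real" and \<mu> :: "nat set \<Rightarrow> real"
  assumes "n \<ge> 1"
    and "\<And>j. j \<in> {1..n} \<Longrightarrow> mono_on {0..} (f j)"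
    and "\<And>R. R \<noteq> {} \<Longrightarrow> R \<subseteq> {1..n} \<Longrightarrow> \<mu> R \<ge> 0"
  shows "D_G n f \<mu> \<noteq> {}
    \<and> (\<exists>S\<in>D_G n f \<mu>. E_G f \<mu> S = Some (h_G n f \<mu>) \<and>
         (\<forall>S'\<in>D_G n f \<mu>. the (E_G f \<mu> S') \<le> h_G n f \<mu>))
    \<and> P_G n f \<mu> \<noteq> {}"
proof -
  have j: "(1::nat) \<in> {1..n}" using assms(1) by simp
  have "{1} \<in> D_G n f \<mu>" using single_in_D[OF j] assms(3)[of "{1}"] j by auto
  hence ne: "D_G n f \<mu> \<noteq> {}" by blast
  have fin: "finite (D_G n f \<mu>)"
    by (rule finite_subset[of _ "Pow {1..n}"]) (auto simp: D_G_def)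
  let ?F = "(\<lambda>S. the (E_G f \<mu> S))"
  have "h_G n f \<mu> \<in> ?F ` D_G n f \<mu>"
    unfolding h_G_def using fin ne by (intro Max_in) auto
  then obtain S where S: "S \<in> D_G n f \<mu>" "?F S = h_G n f \<mu>" by (metis (no_types, lifting) imageE)
  have ES: "E_G f \<mu> S = Some (h_G n f \<mu>)" using S by (auto simp: D_G_def)
  have le: "\<forall>S'\<in>D_G n f \<mu>. ?F S' \<le> h_G n f \<mu>"
    unfolding h_G_def using fin by (auto intro: Max_ge)
  have "S \<subseteq> P_G n f \<mu>" unfolding P_G_def using S(1) ES by blast
  moreover have "S \<noteq> {}" using S(1) by (auto simp: D_G_def)
  ultimately have "P_G n f \<mu> \<noteq> {}" by blast
  with ne S(1) ES le show ?thesis by blast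
qed

end
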